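(* Every infinite set $X\subseteq\omega$ has an infinite subset $B$ such that for all infinite $C, D\subseteq B$ there is no Turing functional $\Phi$ with $\Phi(S) = C$ for every infinite $S\subseteq D$. *)

theory Defs
  imports Main
begin

text \<open>Turing functionals, modelled as codes of partial recursive functions
(Kleene's mu-recursive functions) with one query set for a set of naturals.\<close>

datatype recf =
    Zero
  | Succ
  | Proj nat
  | Comp recf "recf list"
  | Prim recf recf
  | Mn recf
  | Query

inductive oeval :: "nat set \<Rightarrow> recf \<Rightarrow> nat list \<Rightarrow> nat \<Rightarrow> bool" for A :: "nat set" where
  zero:   "oeval A Zero xs 0"
| succ:   "oeval A Succ [x] (Suc x)"
| proj:   "i < length xs \<Longrightarrow> oeval A (Proj i) xs (xs ! i)"
| comp:   "list_all2 (\<lambda>g y. oeval A g xs y) gs ys \<Longrightarrow> oeval A f ys y \<Longrightarrow> oeval A (Comp f gs) xs y"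
| prim0:  "oeval A f xs y \<Longrightarrow> oeval A (Prim f g) (0 # xs) y"
| primS:  "oeval A (Prim f g) (n # xs) r \<Longrightarrow> oeval A g (r # n # xs) y
           \<Longrightarrow> oeval A (Prim f g) (Suc n # xs) y"
| mn:     "oeval A f (y # xs) 0 \<Longrightarrow> (\<forall>z<y. \<exists>v. oeval A f (z # xs) v \<and> v \<noteq> 0)
           \<Longrightarrow> oeval A (Mn f) xs y"
| query:  "oeval A Query [x] (if x \<in> A then 1 else 0)"

text \<open>\<open>\<Phi>(S) = C\<close>: with query set \<open>S\<close>, \<open>\<Phi>\<close> is total on unary inputs and computes
the characteristic function of \<open>C\<close>.\<close>
definition functional_computes :: "recf \<Rightarrow> nat set \<Rightarrow> nat set \<Rightarrow> bool" where
  "functional_computes \<Phi> S C \<longleftrightarrow>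
     (\<forall>n y. oeval S \<Phi> [n] y \<longleftrightarrow> y = (if n \<in> C then 1 else 0))"

end

theory Submission
  imports Defs "HOL-Library.Countable" "HOL-Library.Infinite_Set"
begin

instance recf :: countable by countable_datatype

definition agr :: "nat \<Rightarrow> nat set \<Rightarrow> nat set \<Rightarrow> bool" where
  "agr u A B \<longleftrightarrow> (\<forall>w<u. w \<in> B \<longleftrightarrow> w \<in> A)"

lemma agr_mono: "agr u A B \<Longrightarrow> u' \<le> u \<Longrightarrow> agr u' A B"
  unfolding agr_def by auto

lemma list_all2_use:
  assumes "list_all2 (\<lambda>g y. \<exists>u. \<forall>A'. agr u A A' \<longrightarrow> oeval A' g xs y) gs ys"
  shows "\<exists>u. \<forall>A'. agr u A A' \<longrightarrow> list_all2 (\<lambda>g y. oeval A' g xs y) gs ys"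
  using assms
proof (induction rule: list_all2_induct)
  case Nil
  then show ?case by auto
next
  case (Cons g gs y ys)
  obtain u1 where u1: "\<forall>A'. agr u1 A A' \<longrightarrow> oeval A' g xs y" using Cons by auto
  obtain u2 where u2: "\<forall>A'. agr u2 A A' \<longrightarrow> list_all2 (\<lambda>g y. oeval A' g xs y) gs ys" using Cons by auto
  show ?case
  proof (rule exI[of _ "max u1 u2"], intro allI impI)
    fix A' assume "agr (max u1 u2) A A'"
    then have "agr u1 A A'" "agr u2 A A'" using agr_mono by auto
    then show "list_all2 (\<lambda>g y. oeval A' g xs y) (g # gs) (y # ys)" using u1 u2 by auto
  qed
qed

lemma use_lemma:
  "oeval A f xs y \<Longrightarrow> \<exists>u. \<forall>A'. agr u A A' \<longrightarrow> oeval A' f xs y"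
proof (induction rule: oeval.induct)
  case (zero xs)
  then show ?case by (auto intro: oeval.zero)
next
  case (succ x)
  then show ?case by (auto intro: oeval.succ)
next
  case (proj i xs)
  then show ?case by (auto intro: oeval.proj)
next
  case (comp xs gs ys f y)
  have "list_all2 (\<lambda>g y. \<exists>u. \<forall>A'. agr u A A' \<longrightarrow> oeval A' g xs y) gs ys"
    using comp(1) by (rule list_all2_mono) auto
  then obtain u1 where u1: "\<forall>A'. agr u1 A A' \<longrightarrow> list_all2 (\<lambda>g y. oeval A' g xs y) gs ys"
    using list_all2_use by blast
  obtain u2 where u2: "\<forall>A'. agr u2 A A' \<longrightarrow> oeval A' f ys y" using comp by auto
  show ?case
  proof (rule exI[of _ "max u1 u2"], intro allI impI)
    fix A' assume "agr (max u1 u2) A A'"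
    then have "agr u1 A A'" "agr u2 A A'" using agr_mono by auto
    then show "oeval A' (Comp f gs) xs y" using u1 u2 by (auto intro: oeval.comp)
  qed
next
  case (prim0 f xs y g)
  then show ?case by (auto intro: oeval.prim0)
next
  case (primS f g n xs r y)
  obtain u1 where u1: "\<forall>A'. agr u1 A A' \<longrightarrow> oeval A' (Prim f g) (n # xs) r" using primS by auto
  obtain u2 where u2: "\<forall>A'. agr u2 A A' \<longrightarrow> oeval A' g (r # n # xs) y" using primS by auto
  show ?case
  proof (rule exI[of _ "max u1 u2"], intro allI impI)
    fix A' assume "agr (max u1 u2) A A'"
    then have "agr u1 A A'" "agr u2 A A'" using agr_mono by auto
    then show "oeval A' (Prim f g) (Suc n # xs) y" using u1 u2 by (auto intro: oeval.primS)
  qed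
next
  case (mn f y xs)
  obtain u1 where u1: "\<forall>A'. agr u1 A A' \<longrightarrow> oeval A' f (y # xs) 0" using mn by auto
  have "\<forall>z. \<exists>p. z < y \<longrightarrow> (snd p \<noteq> 0 \<and> (\<forall>A'. agr (fst p) A A' \<longrightarrow> oeval A' f (z # xs) (snd p)))"
  proof
    fix z
    show "\<exists>p. z < y \<longrightarrow> (snd p \<noteq> 0 \<and> (\<forall>A'. agr (fst p) A A' \<longrightarrow> oeval A' f (z # xs) (snd p)))"
    proof (cases "z < y")
      case True
      from mn(3)[rule_format, OF True] obtain v u where
        "v \<noteq> 0" "\<forall>A'. agr u A A' \<longrightarrow> oeval A' f (z # xs) v" by blast
      then show ?thesis by (intro exI[of _ "(u, v)"]) simp
    qed simp
  qed
  then obtain p where p: "\<And>z. z < y \<Longrightarrow> snd (p z) \<noteq> 0 \<and> (\<forall>A'. agr (fst (p z)) A A' \<longrightarrow> oeval A' f (z # xs) (snd (p z)))"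
    by metis
  define U where "U = max u1 (\<Sum>z<y. fst (p z))"
  have "oeval A' (Mn f) xs y" if "agr U A A'" for A'
  proof (rule oeval.mn)
    show "oeval A' f (y # xs) 0" using u1 that agr_mono U_def by auto
    show "\<forall>z<y. \<exists>v. oeval A' f (z # xs) v \<and> v \<noteq> 0"
    proof (intro allI impI)
      fix z assume z: "z < y"
      have "fst (p z) \<le> (\<Sum>z<y. fst (p z))" using z by (intro member_le_sum) auto
      then have "agr (fst (p z)) A A'" using that U_def agr_mono by auto
      then show "\<exists>v. oeval A' f (z # xs) v \<and> v \<noteq> 0" using p[OF z] by blast
    qed
  qed
  then show ?case by blast
next
  case (query x)
  show ?case
  proof (rule exI[of _ "Suc x"], intro allI impI)
    fix A' assume "agr (Suc x) A A'"
    then have "x \<in> A' \<longleftrightarrow> x \<in> A" unfolding agr_def by auto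
    then show "oeval A' Query [x] (if x \<in> A then 1 else 0)"
      using oeval.query[of A' x] by simp
  qed
qed

lemma fusion_nat:
  fixes P :: "nat set \<Rightarrow> nat set \<Rightarrow> bool"
  assumes P0: "P {} M0"
    and step: "\<And>A M. P A M \<Longrightarrow> \<exists>a M'. a \<in> M \<and> M' \<subseteq> M \<and> (\<forall>x\<in>M'. a < x) \<and> Q A M a M' \<and> P (insert a A) M'"
  shows "\<exists>a M. M 0 = M0 \<and> (\<forall>k. P (a ` {..<k}) (M k) \<and> a k \<in> M k \<and> M (Suc k) \<subseteq> M k \<and>
            (\<forall>x\<in>M (Suc k). a k < x) \<and> Q (a ` {..<k}) (M k) (a k) (M (Suc k)))"
proof -
  define g where "g = (\<lambda>(A, M). SOME p. fst p \<in> M \<and> snd p \<subseteq> M \<and> (\<forall>x\<in>snd p. fst p < x) \<and>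
       Q A M (fst p) (snd p) \<and> P (insert (fst p) A) (snd p))"
  have g: "fst (g (A, M)) \<in> M \<and> snd (g (A, M)) \<subseteq> M \<and> (\<forall>x\<in>snd (g (A, M)). fst (g (A, M)) < x) \<and>
       Q A M (fst (g (A, M))) (snd (g (A, M))) \<and> P (insert (fst (g (A, M))) A) (snd (g (A, M)))"
    if PAM: "P A M" for A M
  proof -
    obtain a M' where "a \<in> M \<and> M' \<subseteq> M \<and> (\<forall>x\<in>M'. a < x) \<and> Q A M a M' \<and> P (insert a A) M'"
      using step[OF PAM] by blast
    then have "\<exists>p. fst p \<in> M \<and> snd p \<subseteq> M \<and> (\<forall>x\<in>snd p. fst p < x) \<and>
       Q A M (fst p) (snd p) \<and> P (insert (fst p) A) (snd p)" by (intro exI[of _ "(a, M')"]) simp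
    then show ?thesis unfolding g_def case_prod_conv by (rule someI_ex)
  qed
  define st where "st = rec_nat ({}, M0) (\<lambda>k s. (insert (fst (g s)) (fst s), snd (g s)))"
  have st0: "st 0 = ({}, M0)" and stS: "\<And>k. st (Suc k) = (insert (fst (g (st k))) (fst (st k)), snd (g (st k)))"
    unfolding st_def by simp_all
  define a where "a = (\<lambda>k. fst (g (st k)))"
  define M where "M = (\<lambda>k. snd (st k))"
  have inv: "fst (st k) = a ` {..<k} \<and> P (fst (st k)) (snd (st k))" for k
  proof (induction k)
    case 0
    then show ?case using st0 P0 by simp
  next
    case (Suc k)
    have "P (fst (st k)) (snd (st k))" using Suc by blast
    then have "P (insert (fst (g (st k))) (fst (st k))) (snd (g (st k)))"
      using g[of "fst (st k)" "snd (st k)"] by simp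
    moreover have "a ` {..<Suc k} = insert (a k) (a ` {..<k})"
      by (simp add: lessThan_Suc)
    ultimately show ?case using Suc stS[of k] unfolding a_def by simp
  qed
  have "M 0 = M0" using st0 M_def by simp
  moreover have "P (a ` {..<k}) (M k) \<and> a k \<in> M k \<and> M (Suc k) \<subseteq> M k \<and>
            (\<forall>x\<in>M (Suc k). a k < x) \<and> Q (a ` {..<k}) (M k) (a k) (M (Suc k))" for k
  proof -
    have P: "P (fst (st k)) (snd (st k))" and A: "fst (st k) = a ` {..<k}" using inv[of k] by blast+
    have "g (st k) = g (fst (st k), snd (st k))" by simp
    then show ?thesis using g[OF P] A P stS[of k] unfolding a_def M_def by simp
  qed
  ultimately show ?thesis by blast
qed

lemma fusion_nat0:
  fixes P :: "nat set \<Rightarrow> nat set \<Rightarrow> bool"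
  assumes P0: "P {} M0"
    and step: "\<And>A M. P A M \<Longrightarrow> \<exists>a M'. a \<in> M \<and> M' \<subseteq> M \<and> (\<forall>x\<in>M'. a < x) \<and> P (insert a A) M'"
  shows "\<exists>a M. M 0 = M0 \<and> (\<forall>k. P (a ` {..<k}) (M k) \<and> a k \<in> M k \<and> M (Suc k) \<subseteq> M k \<and>
            (\<forall>x\<in>M (Suc k). a k < x))"
proof -
  have "\<exists>a M. M 0 = M0 \<and> (\<forall>k. P (a ` {..<k}) (M k) \<and> a k \<in> M k \<and> M (Suc k) \<subseteq> M k \<and>
            (\<forall>x\<in>M (Suc k). a k < x) \<and> True)"
  proof (rule fusion_nat[where Q="\<lambda>_ _ _ _. True"])
    show "P {} M0" by (rule P0)
  next
    fix A M assume "P A M"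
    from step[OF this] show "\<exists>a M'. a \<in> M \<and> M' \<subseteq> M \<and> (\<forall>x\<in>M'. a < x) \<and> True \<and> P (insert a A) M'"
      by simp
  qed
  then show ?thesis by simp
qed

definition acc :: "nat set set \<Rightarrow> nat set \<Rightarrow> nat set \<Rightarrow> bool" where
  "acc F s M \<longleftrightarrow> (\<forall>N\<subseteq>M. infinite N \<longrightarrow> (\<exists>n. s \<union> (N \<inter> {..<n}) \<in> F))"

definition rej :: "nat set set \<Rightarrow> nat set \<Rightarrow> nat set \<Rightarrow> bool" where
  "rej F s M \<longleftrightarrow> (\<forall>N\<subseteq>M. infinite N \<longrightarrow> \<not> acc F s N)"

definition nofin :: "nat set set \<Rightarrow> nat set \<Rightarrow> bool" where
  "nofin F L \<longleftrightarrow> (\<forall>s. finite s \<longrightarrow> s \<subseteq> L \<longrightarrow> s \<notin> F)"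

lemma acc_mono: "acc F s M \<Longrightarrow> N \<subseteq> M \<Longrightarrow> acc F s N"
  unfolding acc_def by blast

lemma rej_mono: "rej F s M \<Longrightarrow> N \<subseteq> M \<Longrightarrow> rej F s N"
  unfolding rej_def by blast

lemma nofin_mono: "nofin F M \<Longrightarrow> N \<subseteq> M \<Longrightarrow> nofin F N"
  unfolding nofin_def by blast

lemma decide: "infinite M \<Longrightarrow> \<exists>N\<subseteq>M. infinite N \<and> (acc F s N \<or> rej F s N)"
  unfolding rej_def by blast

lemma decide_many:
  assumes "finite T" "infinite M"
  shows "\<exists>N\<subseteq>M. infinite N \<and> (\<forall>s\<in>T. acc F s N \<or> rej F s N)"
  using assms
proof (induction T rule: finite_induct)
  case empty
  then show ?case by blast
next
  case (insert s T)
  then obtain N where N: "N \<subseteq> M" "infinite N" "\<forall>s\<in>T. acc F s N \<or> rej F s N" by blast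
  obtain N' where N': "N' \<subseteq> N" "infinite N'" "acc F s N' \<or> rej F s N'" using decide[OF N(2)] by blast
  have "\<forall>s\<in>T. acc F s N' \<or> rej F s N'" using N(3) N'(1) acc_mono rej_mono by blast
  then show ?case using N N' by blast
qed

lemma acc_in: "s \<in> F \<Longrightarrow> acc F s M"
  unfolding acc_def by (intro allI impI exI[of _ 0]) simp

lemma fin_sub_range:
  fixes c :: "nat \<Rightarrow> nat"
  assumes "finite s" "s \<subseteq> range c"
  shows "\<exists>k. s \<subseteq> c ` {..<k}"
proof -
  obtain I where I: "finite I" "s = c ` I" using finite_subset_image[OF assms] by blast
  obtain k where "\<forall>n\<in>I. n < k" using I(1) finite_nat_set_iff_bounded by blast
  then show ?thesis using I by auto
qed

lemma antimono_seq:
  assumes "\<And>k. M (Suc k) \<subseteq> M k" "m \<le> n"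
  shows "M n \<subseteq> M m"
  by (rule lift_Suc_antimono_le[of M, OF assms(1) assms(2)])

lemma fusion1:
  assumes "infinite M"
  shows "\<exists>a::nat\<Rightarrow>nat. strict_mono a \<and> range a \<subseteq> M \<and>
     (\<forall>k s. s \<subseteq> a ` {..<k} \<longrightarrow> acc F s (a ` {k..}) \<or> rej F s (a ` {k..}))"
proof -
  obtain M0 where M0: "M0 \<subseteq> M" "infinite M0" "acc F {} M0 \<or> rej F {} M0"
    using decide[OF assms] by blast
  define P where "P = (\<lambda>A M. finite A \<and> infinite M \<and> (\<forall>s\<subseteq>A. acc F s M \<or> rej F s M))"
  have P0: "P {} M0" using M0 unfolding P_def by auto
  have step: "\<exists>a M'. a \<in> M \<and> M' \<subseteq> M \<and> (\<forall>x\<in>M'. a < x) \<and> P (insert a A) M'"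
    if PA: "P A M" for A M
  proof -
    have fin: "finite A" and inf: "infinite M" using PA unfolding P_def by auto
    obtain a where a: "a \<in> M" using infinite_imp_nonempty[OF inf] by blast
    have "infinite (M - {..a})" using inf by (simp add: Diff_infinite_finite)
    then obtain N where N: "N \<subseteq> M - {..a}" "infinite N"
      "\<forall>s\<in>Pow (insert a A). acc F s N \<or> rej F s N"
      using decide_many[of "Pow (insert a A)" "M - {..a}" F] fin by auto
    have "P (insert a A) N" using N fin unfolding P_def by auto
    moreover have "\<forall>x\<in>N. a < x" using N(1) by auto
    ultimately show ?thesis using a N(1) by (intro exI[of _ a] exI[of _ N]) auto
  qed
  have "\<exists>a Ms. Ms 0 = M0 \<and> (\<forall>k. P (a ` {..<k}) (Ms k) \<and> a k \<in> Ms k \<and> Ms (Suc k) \<subseteq> Ms k \<and>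
            (\<forall>x\<in>Ms (Suc k). a k < x))"
    by (rule fusion_nat0[of P M0, OF P0], rule step, assumption)
  then obtain a Ms where AB: "Ms 0 = M0 \<and> (\<forall>k. P (a ` {..<k}) (Ms k) \<and> a k \<in> Ms k \<and> Ms (Suc k) \<subseteq> Ms k \<and>
            (\<forall>x\<in>Ms (Suc k). a k < x))"
    by (elim exE) (rule that)
  have A: "Ms 0 = M0" using AB by (rule conjunct1)
  have B: "P (a ` {..<k}) (Ms k) \<and> a k \<in> Ms k \<and> Ms (Suc k) \<subseteq> Ms k \<and>
            (\<forall>x\<in>Ms (Suc k). a k < x)" for k
    using AB by simp
  have dec: "\<And>k. Ms (Suc k) \<subseteq> Ms k" using B by simp
  have sm: "strict_mono a"
    unfolding strict_mono_Suc_iff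
  proof
    fix k show "a k < a (Suc k)" using B[of k] B[of "Suc k"] by simp
  qed
  have sub: "a ` {k..} \<subseteq> Ms k" for k
  proof
    fix x assume "x \<in> a ` {k..}"
    then obtain j where "j \<ge> k" "x = a j" by auto
    then show "x \<in> Ms k" using B[of j] antimono_seq[of Ms k j] dec by auto
  qed
  have rng: "range a \<subseteq> M"
  proof
    fix x assume "x \<in> range a"
    then obtain j where j: "x = a j" by auto
    have "a j \<in> a ` {0..}" by simp
    then have "x \<in> Ms 0" using sub[of 0] j by blast
    then show "x \<in> M" using A M0(1) by blast
  qed
  have dd: "\<forall>k s. s \<subseteq> a ` {..<k} \<longrightarrow> acc F s (a ` {k..}) \<or> rej F s (a ` {k..})"
  proof (intro allI impI)
    fix k s assume "s \<subseteq> a ` {..<k}"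
    moreover have "\<forall>s\<subseteq>a ` {..<k}. acc F s (Ms k) \<or> rej F s (Ms k)" using B[of k] unfolding P_def by (elim conjE)
    ultimately have "acc F s (Ms k) \<or> rej F s (Ms k)" by blast
    then show "acc F s (a ` {k..}) \<or> rej F s (a ` {k..})"
      using sub[of k] acc_mono[of F s "Ms k" "a ` {k..}"] rej_mono[of F s "Ms k" "a ` {k..}"] by blast
  qed
  have "strict_mono a \<and> range a \<subseteq> M \<and> (\<forall>k s. s \<subseteq> a ` {..<k} \<longrightarrow> acc F s (a ` {k..}) \<or> rej F s (a ` {k..}))"
    using sm rng dd by (intro conjI)
  then show ?thesis by blast
qed

lemma bad_finite:
  assumes sm: "strict_mono a" and rj: "rej F s (a ` {k..})"
  shows "finite {j. k \<le> j \<and> acc F (insert (a j) s) (a ` {Suc j..})}"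
proof (rule ccontr)
  define Bad where "Bad = {j. k \<le> j \<and> acc F (insert (a j) s) (a ` {Suc j..})}"
  assume "infinite {j. k \<le> j \<and> acc F (insert (a j) s) (a ` {Suc j..})}"
  then have infB: "infinite Bad" unfolding Bad_def .
  have inj: "inj a" using sm by (rule strict_mono_imp_inj_on)
  define W where "W = a ` Bad"
  have W1: "W \<subseteq> a ` {k..}" unfolding W_def Bad_def by auto
  have W2: "infinite W" unfolding W_def using infB inj by (simp add: finite_image_iff inj_on_subset)
  have "acc F s W"
    unfolding acc_def
  proof (intro allI impI)
    fix N assume N: "N \<subseteq> W" "infinite N"
    obtain x0 where x0: "x0 \<in> N" using N(2) infinite_imp_nonempty by blast
    define n0 where "n0 = (LEAST x. x \<in> N)"
    have n0N: "n0 \<in> N" unfolding n0_def using x0 by (rule LeastI[of "\<lambda>x. x \<in> N"])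
    have n0le: "\<And>x. x \<in> N \<Longrightarrow> n0 \<le> x" unfolding n0_def by (rule Least_le[of "\<lambda>x. x \<in> N"])
    obtain j where j: "j \<in> Bad" "n0 = a j" using n0N N(1) unfolding W_def by auto
    define N' where "N' = N - {a j}"
    have gt: "a j < x" if x: "x \<in> N'" for x
    proof -
      have "x \<in> N" "x \<noteq> a j" using x unfolding N'_def by auto
      then show ?thesis using n0le[of x] j(2) by simp
    qed
    have N'sub: "N' \<subseteq> a ` {Suc j..}"
    proof
      fix x assume x: "x \<in> N'"
      then obtain i where i: "x = a i" using N(1) unfolding N'_def W_def by auto
      have "a j < a i" using gt[OF x] i by simp
      then have "j < i" using sm by (simp add: strict_mono_less)
      then show "x \<in> a ` {Suc j..}" using i by auto
    qed
    have N'inf: "infinite N'" unfolding N'_def using N(2) by simp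
    have "acc F (insert (a j) s) (a ` {Suc j..})" using j(1) unfolding Bad_def by simp
    then obtain m where m: "insert (a j) s \<union> (N' \<inter> {..<m}) \<in> F"
      unfolding acc_def using N'sub N'inf by blast
    define m' where "m' = max m (Suc (a j))"
    have iff: "x < m' \<longleftrightarrow> x < m" if "x \<in> N'" for x
      using gt[OF that] unfolding m'_def by auto
    have e1: "N' \<inter> {..<m'} = N' \<inter> {..<m}"
      using iff by blast
    have "a j < m'" unfolding m'_def by simp
    then have e2: "N \<inter> {..<m'} = insert (a j) (N' \<inter> {..<m'})"
      unfolding N'_def using n0N j(2) by blast
    have "s \<union> (N \<inter> {..<m'}) = insert (a j) s \<union> (N' \<inter> {..<m})"
      unfolding e2 e1 by blast
    then have "s \<union> (N \<inter> {..<m'}) \<in> F" using m by simp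
    then show "\<exists>n. s \<union> (N \<inter> {..<n}) \<in> F" by blast
  qed
  moreover have "\<not> acc F s W" using rj W1 W2 unfolding rej_def by simp
  ultimately show False by simp
qed


lemma fusion2:
  fixes a :: "nat \<Rightarrow> nat"
  assumes sm: "strict_mono a"
    and dd: "\<forall>k s. s \<subseteq> a ` {..<k} \<longrightarrow> acc F s (a ` {k..}) \<or> rej F s (a ` {k..})"
    and r0: "rej F {} (range a)"
  shows "\<exists>L \<subseteq> range a. infinite L \<and> nofin F L"
proof -
  have inj: "inj a" using sm by (rule strict_mono_imp_inj_on)
  define P where "P = (\<lambda>A M. finite A \<and> (\<exists>k. M = a ` {k..} \<and> A \<subseteq> a ` {..<k}) \<and> (\<forall>s\<subseteq>A. rej F s M))"
  have P0: "P {} (range a)"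
  proof -
    have "range a = a ` {0..}" by simp
    moreover have "\<forall>s\<subseteq>{}. rej F s (range a)" using r0 by simp
    ultimately show ?thesis unfolding P_def by blast
  qed
  have step: "\<exists>b M'. b \<in> M \<and> M' \<subseteq> M \<and> (\<forall>x\<in>M'. b < x) \<and> P (insert b A) M'"
    if PA: "P A M" for A M
  proof -
    obtain k where fin: "finite A" and Mk: "M = a ` {k..}" and Ak: "A \<subseteq> a ` {..<k}"
      and rj: "\<forall>s\<subseteq>A. rej F s M"
      using PA unfolding P_def by blast
    define U where "U = (\<Union>s\<in>Pow A. {j. k \<le> j \<and> acc F (insert (a j) s) (a ` {Suc j..})})"
    have "finite U" unfolding U_def
    proof (rule finite_UN_I)
      show "finite (Pow A)" using fin by simp
      fix s assume "s \<in> Pow A"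
      then have "rej F s (a ` {k..})" using rj Mk by auto
      then show "finite {j. k \<le> j \<and> acc F (insert (a j) s) (a ` {Suc j..})}"
        by (rule bad_finite[OF sm])
    qed
    moreover have "infinite {k::nat..}" by (rule infinite_Ici)
    ultimately have "infinite ({k..} - U)" by (simp add: Diff_infinite_finite)
    then obtain j where j: "j \<in> {k..} - U" using infinite_imp_nonempty by blast
    have jk: "k \<le> j" using j by simp
    define M' where "M' = a ` {Suc j..}"
    have "a j \<in> M" using Mk jk by simp
    moreover have "M' \<subseteq> M" unfolding M'_def Mk using jk by auto
    moreover have "\<forall>x\<in>M'. a j < x" unfolding M'_def using sm by (auto simp: strict_mono_less)
    moreover have "P (insert (a j) A) M'"
    proof -
      have "A \<subseteq> a ` {..<Suc j}" using Ak jk by (auto intro: image_mono[THEN subsetD])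
      then have ins_sub: "insert (a j) A \<subseteq> a ` {..<Suc j}" by auto
      have rjs: "\<forall>s\<subseteq>insert (a j) A. rej F s M'"
      proof (intro allI impI)
        fix s assume s: "s \<subseteq> insert (a j) A"
        show "rej F s M'"
        proof (cases "a j \<in> s")
          case False
          then have "s \<subseteq> A" using s by auto
          then have "rej F s M" using rj by simp
          then show ?thesis using rej_mono \<open>M' \<subseteq> M\<close> by blast
        next
          case True
          define s0 where "s0 = s - {a j}"
          have s0A: "s0 \<subseteq> A" using s unfolding s0_def by auto
          have s_eq: "s = insert (a j) s0" using True unfolding s0_def by auto
          have "s \<subseteq> a ` {..<Suc j}" using s ins_sub by blast
          then have "acc F s M' \<or> rej F s M'" using dd unfolding M'_def by blast
          moreover have "\<not> acc F s M'"
          proof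
            assume "acc F s M'"
            then have "j \<in> U" unfolding U_def M'_def s_eq using s0A jk by blast
            then show False using j by simp
          qed
          ultimately show ?thesis by blast
        qed
      qed
      show ?thesis unfolding P_def using fin ins_sub rjs M'_def by blast
    qed
    ultimately show ?thesis by blast
  qed
  have "\<exists>c Ms. Ms 0 = range a \<and> (\<forall>k. P (c ` {..<k}) (Ms k) \<and> c k \<in> Ms k \<and> Ms (Suc k) \<subseteq> Ms k \<and>
            (\<forall>x\<in>Ms (Suc k). c k < x))"
    by (rule fusion_nat0[of P "range a", OF P0], rule step, assumption)
  then obtain c Ms where AB: "Ms 0 = range a \<and> (\<forall>k. P (c ` {..<k}) (Ms k) \<and> c k \<in> Ms k \<and> Ms (Suc k) \<subseteq> Ms k \<and>
            (\<forall>x\<in>Ms (Suc k). c k < x))"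
    by (elim exE) (rule that)
  have B: "P (c ` {..<k}) (Ms k) \<and> c k \<in> Ms k \<and> Ms (Suc k) \<subseteq> Ms k \<and>
            (\<forall>x\<in>Ms (Suc k). c k < x)" for k
    using AB by blast
  have smc: "strict_mono c"
    unfolding strict_mono_Suc_iff
  proof
    fix k show "c k < c (Suc k)" using B[of k] B[of "Suc k"] by blast
  qed
  have rng: "range c \<subseteq> range a"
  proof
    fix x assume "x \<in> range c"
    then obtain k where "x = c k" by auto
    moreover obtain k' where "Ms k = a ` {k'..}" using B[of k] unfolding P_def by blast
    ultimately show "x \<in> range a" using B[of k] by auto
  qed
  have "infinite (range c)" using smc strict_mono_imp_inj_on[OF smc] by (simp add: finite_image_iff)
  moreover have "nofin F (range c)"
    unfolding nofin_def
  proof (intro allI impI notI)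
    fix s assume s: "finite s" "s \<subseteq> range c" "s \<in> F"
    obtain k where k: "s \<subseteq> c ` {..<k}" using fin_sub_range[OF s(1) s(2)] by blast
    obtain k' where Mk: "Ms k = a ` {k'..}" and rj: "\<forall>s\<subseteq>c ` {..<k}. rej F s (Ms k)"
      using B[of k] unfolding P_def by blast
    have "rej F s (Ms k)" using rj k by blast
    moreover have "infinite (Ms k)" unfolding Mk using inj infinite_Ici[of k']
      by (simp add: finite_image_iff inj_on_subset)
    moreover have "acc F s (Ms k)" using s(3) by (rule acc_in)
    ultimately show False unfolding rej_def by blast
  qed
  ultimately show ?thesis using rng by blast
qed

theorem nash_williams:
  fixes M :: "nat set"
  assumes "infinite M"
  shows "\<exists>L\<subseteq>M. infinite L \<and> (nofin F L \<or> acc F {} L)"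
proof -
  obtain a :: "nat \<Rightarrow> nat" where sm: "strict_mono a" and rng: "range a \<subseteq> M"
    and dd: "\<forall>k s. s \<subseteq> a ` {..<k} \<longrightarrow> acc F s (a ` {k..}) \<or> rej F s (a ` {k..})"
    using fusion1[OF assms, of F] by blast
  have infa: "infinite (range a)" using strict_mono_imp_inj_on[OF sm] by (simp add: finite_image_iff)
  have "acc F {} (a ` {0..}) \<or> rej F {} (a ` {0..})" using dd by blast
  then have "acc F {} (range a) \<or> rej F {} (range a)" by simp
  then show ?thesis
  proof
    assume "acc F {} (range a)"
    then show ?thesis using rng infa by blast
  next
    assume "rej F {} (range a)"
    then obtain L where "L \<subseteq> range a" "infinite L" "nofin F L"
      using fusion2[OF sm dd] by blast
    then show ?thesis using rng by blast
  qed
qed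

lemma nw_many:
  fixes M :: "nat set"
  assumes "finite T" "infinite M"
  shows "\<exists>L\<subseteq>M. infinite L \<and> (\<forall>F\<in>T. nofin F L \<or> acc F {} L)"
  using assms
proof (induction T rule: finite_induct)
  case empty
  then show ?case by blast
next
  case (insert F T)
  then obtain N where N: "N \<subseteq> M" "infinite N" "\<forall>F\<in>T. nofin F N \<or> acc F {} N" by blast
  obtain N' where N': "N' \<subseteq> N" "infinite N'" "nofin F N' \<or> acc F {} N'"
    using nash_williams[OF N(2)] by blast
  have "\<forall>F\<in>T. nofin F N' \<or> acc F {} N'" using N(3) N'(1) nofin_mono acc_mono by blast
  then show ?case using N N' by blast
qed

definition sat :: "recf \<Rightarrow> nat set \<Rightarrow> nat \<Rightarrow> nat \<Rightarrow> bool" where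
  "sat \<Phi> \<sigma> z v \<longleftrightarrow> \<sigma> \<noteq> {} \<and> finite \<sigma> \<and>
     (\<forall>A'. (\<forall>w\<le>Max \<sigma>. w \<in> A' \<longleftrightarrow> w \<in> \<sigma>) \<longrightarrow> oeval A' \<Phi> [z] v)"

definition Fam :: "recf \<Rightarrow> nat set \<Rightarrow> nat \<Rightarrow> nat set set" where
  "Fam \<Phi> Z z = {\<sigma>. sat \<Phi> \<sigma> z 1 \<and> (\<forall>z'\<in>Z-{z}. \<not> sat \<Phi> \<sigma> z' 1)}"

lemma sat_ext:
  assumes s: "sat \<Phi> \<sigma> z v" and ft: "finite \<tau>" and e: "\<tau> \<inter> {..Max \<sigma>} = \<sigma>"
  shows "sat \<Phi> \<tau> z v"
proof -
  have ne: "\<sigma> \<noteq> {}" and fs: "finite \<sigma>" and H: "\<forall>A'. (\<forall>w\<le>Max \<sigma>. w \<in> A' \<longleftrightarrow> w \<in> \<sigma>) \<longrightarrow> oeval A' \<Phi> [z] v"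
    using s unfolding sat_def by auto
  have sub: "\<sigma> \<subseteq> \<tau>" using e by auto
  then have tne: "\<tau> \<noteq> {}" using ne by auto
  have le: "Max \<sigma> \<le> Max \<tau>" using Max_mono[OF sub ne ft] .
  have "oeval A' \<Phi> [z] v" if A': "\<forall>w\<le>Max \<tau>. w \<in> A' \<longleftrightarrow> w \<in> \<tau>" for A'
  proof -
    have "\<forall>w\<le>Max \<sigma>. w \<in> A' \<longleftrightarrow> w \<in> \<sigma>"
    proof (intro allI impI)
      fix w assume w: "w \<le> Max \<sigma>"
      then have "w \<in> A' \<longleftrightarrow> w \<in> \<tau>" using A' le by auto
      also have "\<dots> \<longleftrightarrow> w \<in> \<sigma>" using w e by auto
      finally show "w \<in> A' \<longleftrightarrow> w \<in> \<sigma>" .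
    qed
    then show ?thesis using H by blast
  qed
  then show ?thesis unfolding sat_def using tne ft by blast
qed

lemma seg_ext:
  fixes L :: "nat set"
  assumes ne: "L \<inter> {..<n1} \<noteq> {}" and le: "n1 \<le> n2"
  shows "(L \<inter> {..<n2}) \<inter> {..Max (L \<inter> {..<n1})} = L \<inter> {..<n1}"
proof -
  have fin: "finite (L \<inter> {..<n1})" by simp
  have "Max (L \<inter> {..<n1}) \<in> L \<inter> {..<n1}" using Max_in[OF fin ne] .
  then have m: "Max (L \<inter> {..<n1}) < n1" by simp
  have "x \<le> Max (L \<inter> {..<n1})" if "x \<in> L \<inter> {..<n1}" for x
    using Max_ge[OF fin that] .
  then show ?thesis using m le by auto
qed

lemma at_most_one:
  assumes z: "z1 \<in> Z" "z2 \<in> Z" "z1 \<noteq> z2" and L: "infinite L"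
    and a1: "acc (Fam \<Phi> Z z1) {} L" and a2: "acc (Fam \<Phi> Z z2) {} L"
  shows False
proof -
  have "\<exists>n. L \<inter> {..<n} \<in> Fam \<Phi> Z z1" using a1 L unfolding acc_def by auto
  then obtain n1 where n1: "L \<inter> {..<n1} \<in> Fam \<Phi> Z z1" by blast
  have "\<exists>n. L \<inter> {..<n} \<in> Fam \<Phi> Z z2" using a2 L unfolding acc_def by auto
  then obtain n2 where n2: "L \<inter> {..<n2} \<in> Fam \<Phi> Z z2" by blast
  have gen: False if "n \<le> m" "L \<inter> {..<n} \<in> Fam \<Phi> Z x" "L \<inter> {..<m} \<in> Fam \<Phi> Z y"
     "x \<in> Z" "y \<in> Z" "x \<noteq> y" for n m x y
  proof -
    have s1: "sat \<Phi> (L \<inter> {..<n}) x 1" using that(2) unfolding Fam_def by simp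
    then have "L \<inter> {..<n} \<noteq> {}" unfolding sat_def by simp
    then have "(L \<inter> {..<m}) \<inter> {..Max (L \<inter> {..<n})} = L \<inter> {..<n}"
      using seg_ext that(1) by blast
    then have "sat \<Phi> (L \<inter> {..<m}) x 1" using sat_ext[OF s1] by simp
    moreover have "\<not> sat \<Phi> (L \<inter> {..<m}) x 1" using that(3-6) unfolding Fam_def by auto
    ultimately show False by simp
  qed
  show False
  proof (cases "n1 \<le> n2")
    case True
    then show ?thesis using gen[OF True n1 n2] z by blast
  next
    case False
    then have "n2 \<le> n1" by simp
    then show ?thesis using gen[OF _ n2 n1] z by blast
  qed
qed

lemma core:
  fixes E :: "recf set" and M :: "nat set"
  assumes finE: "finite E" and infM: "infinite M"
  obtains a Z M' where "a \<in> Z" "Z \<subseteq> M" "finite Z" "M' \<subseteq> M" "infinite M'" "\<forall>z\<in>Z. \<forall>y\<in>M'. z < y"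
     "\<forall>\<Phi>\<in>E. \<forall>\<sigma>. \<sigma> \<subseteq> M' \<longrightarrow> sat \<Phi> \<sigma> a 1 \<longrightarrow> (\<exists>z\<in>Z-{a}. sat \<Phi> \<sigma> z 1)"
proof -
  obtain Z where Z: "finite Z" "card Z = Suc (card E)" "Z \<subseteq> M"
    using infinite_arbitrarily_large[OF infM] by blast
  have Zne: "Z \<noteq> {}" using Z(2) by auto
  define M0 where "M0 = M - {..Max Z}"
  have infM0: "infinite M0" unfolding M0_def using infM by (simp add: Diff_infinite_finite)
  define T where "T = (\<lambda>p. Fam (fst p) Z (snd p)) ` (E \<times> Z)"
  have finT: "finite T" unfolding T_def using finE Z(1) by simp
  obtain L where L: "L \<subseteq> M0" "infinite L" "\<forall>F\<in>T. nofin F L \<or> acc F {} L"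
    using nw_many[OF finT infM0] by blast
  have H: "nofin (Fam \<Phi> Z z) L \<or> acc (Fam \<Phi> Z z) {} L" if "\<Phi> \<in> E" "z \<in> Z" for \<Phi> z
  proof -
    have "Fam \<Phi> Z z \<in> T" unfolding T_def using that by force
    then show ?thesis using L(3) by blast
  qed
  define Bad where "Bad = {z\<in>Z. \<exists>\<Phi>\<in>E. acc (Fam \<Phi> Z z) {} L}"
  define g where "g = (\<lambda>z. SOME \<Phi>. \<Phi> \<in> E \<and> acc (Fam \<Phi> Z z) {} L)"
  have g: "g z \<in> E \<and> acc (Fam (g z) Z z) {} L" if "z \<in> Bad" for z
  proof -
    have "\<exists>\<Phi>. \<Phi> \<in> E \<and> acc (Fam \<Phi> Z z) {} L" using that unfolding Bad_def by blast
    then show ?thesis unfolding g_def by (rule someI_ex)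
  qed
  have inj: "inj_on g Bad"
  proof (rule inj_onI)
    fix x y assume x: "x \<in> Bad" and y: "y \<in> Bad" and gxy: "g x = g y"
    show "x = y"
    proof (rule ccontr)
      assume "x \<noteq> y"
      moreover have "x \<in> Z" "y \<in> Z" using x y unfolding Bad_def by auto
      moreover have "acc (Fam (g x) Z x) {} L" using g[OF x] by simp
      moreover have "acc (Fam (g x) Z y) {} L" using g[OF y] gxy by simp
      ultimately show False using at_most_one L(2) by blast
    qed
  qed
  have "g ` Bad \<subseteq> E" using g by blast
  then have cB: "card Bad \<le> card E" using card_inj_on_le[OF inj _ finE] by simp
  have "\<not> Z \<subseteq> Bad"
  proof
    assume "Z \<subseteq> Bad"
    moreover have "Bad \<subseteq> Z" unfolding Bad_def by auto
    ultimately have "Bad = Z" by blast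
    then have "card Z \<le> card Bad" by simp
    then show False using cB Z(2) by simp
  qed
  then obtain a where a: "a \<in> Z" "a \<notin> Bad" by blast
  have nf: "nofin (Fam \<Phi> Z a) L" if "\<Phi> \<in> E" for \<Phi>
    using H[OF that a(1)] a that unfolding Bad_def by blast
  have req: "\<forall>\<Phi>\<in>E. \<forall>\<sigma>. \<sigma> \<subseteq> L \<longrightarrow> sat \<Phi> \<sigma> a 1 \<longrightarrow> (\<exists>z\<in>Z-{a}. sat \<Phi> \<sigma> z 1)"
  proof (intro ballI allI impI)
    fix \<Phi> \<sigma> assume \<Phi>: "\<Phi> \<in> E" and s: "\<sigma> \<subseteq> L" and sa: "sat \<Phi> \<sigma> a 1"
    have "finite \<sigma>" using sa unfolding sat_def by simp
    then have "\<sigma> \<notin> Fam \<Phi> Z a" using nf[OF \<Phi>] s unfolding nofin_def by blast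
    then show "\<exists>z\<in>Z-{a}. sat \<Phi> \<sigma> z 1" using sa unfolding Fam_def by blast
  qed
  have lt: "\<forall>z\<in>Z. \<forall>y\<in>L. z < y"
  proof (intro ballI)
    fix z y assume "z \<in> Z" "y \<in> L"
    then have "z \<le> Max Z" "y \<in> M0" using Max_ge[OF Z(1)] L(1) by auto
    then show "z < y" unfolding M0_def by auto
  qed
  have "L \<subseteq> M" using L(1) unfolding M0_def by auto
  then show thesis using that[OF a(1) Z(3) Z(1) _ L(2) lt req] by blast
qed

theorem proposition3p8:
  fixes X :: "nat set"
  assumes "infinite X"
  shows "\<exists>B. B \<subseteq> X \<and> infinite B \<and>
           (\<forall>C D. C \<subseteq> B \<longrightarrow> D \<subseteq> B \<longrightarrow> infinite C \<longrightarrow> infinite D \<longrightarrow>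
              \<not> (\<exists>\<Phi>. \<forall>S. S \<subseteq> D \<longrightarrow> infinite S \<longrightarrow> functional_computes \<Phi> S C))"
proof -
  define P where "P = (\<lambda>(A::nat set) (M::nat set). finite A \<and> infinite M)"
  define Q where "Q = (\<lambda>(A::nat set) (M::nat set) (b::nat) (M'::nat set). \<exists>Z. b \<in> Z \<and> Z \<subseteq> M \<and> (\<forall>z\<in>Z. \<forall>y\<in>M'. z < y) \<and>
     (\<forall>\<Phi>\<in>(from_nat :: nat \<Rightarrow> recf) ` {..card A}. \<forall>\<sigma>. \<sigma> \<subseteq> M' \<longrightarrow> sat \<Phi> \<sigma> b 1 \<longrightarrow> (\<exists>z\<in>Z-{b}. sat \<Phi> \<sigma> z 1)))"
  have P0: "P {} X" unfolding P_def using assms by simp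
  have step: "\<exists>b M'. b \<in> M \<and> M' \<subseteq> M \<and> (\<forall>x\<in>M'. b < x) \<and> Q A M b M' \<and> P (insert b A) M'"
    if PA: "P A M" for A M
  proof -
    have fA: "finite A" and iM: "infinite M" using PA unfolding P_def by auto
    have fE: "finite ((from_nat :: nat \<Rightarrow> recf) ` {..card A})" by simp
    obtain b Z M' where c: "b \<in> Z" "Z \<subseteq> M" "finite Z" "M' \<subseteq> M" "infinite M'" "\<forall>z\<in>Z. \<forall>y\<in>M'. z < y"
      "\<forall>\<Phi>\<in>(from_nat :: nat \<Rightarrow> recf) ` {..card A}. \<forall>\<sigma>. \<sigma> \<subseteq> M' \<longrightarrow> sat \<Phi> \<sigma> b 1 \<longrightarrow> (\<exists>z\<in>Z-{b}. sat \<Phi> \<sigma> z 1)"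
      by (rule core[OF fE iM])
    have "Q A M b M'" unfolding Q_def
      by (rule exI[where x=Z]) (intro conjI c(1) c(2) c(6) c(7))
    moreover have "P (insert b A) M'" unfolding P_def using fA c(5) by simp
    moreover have "b \<in> M" using c(1,2) by blast
    moreover have "\<forall>x\<in>M'. b < x" using c(1,6) by blast
    ultimately show ?thesis using c(4) by (intro exI[where x=b] exI[where x=M'] conjI)
  qed
  have "\<exists>b Ms. Ms 0 = X \<and> (\<forall>k. P (b ` {..<k}) (Ms k) \<and> b k \<in> Ms k \<and> Ms (Suc k) \<subseteq> Ms k \<and>
            (\<forall>x\<in>Ms (Suc k). b k < x) \<and> Q (b ` {..<k}) (Ms k) (b k) (Ms (Suc k)))"
    by (rule fusion_nat[of P X Q, OF P0], rule step, assumption)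
  then obtain b Ms where AB: "Ms 0 = X \<and> (\<forall>k. P (b ` {..<k}) (Ms k) \<and> b k \<in> Ms k \<and> Ms (Suc k) \<subseteq> Ms k \<and>
            (\<forall>x\<in>Ms (Suc k). b k < x) \<and> Q (b ` {..<k}) (Ms k) (b k) (Ms (Suc k)))"
    by (elim exE) (rule that)
  have M0: "Ms 0 = X" using AB by (rule conjunct1)
  have Bk: "P (b ` {..<k}) (Ms k) \<and> b k \<in> Ms k \<and> Ms (Suc k) \<subseteq> Ms k \<and>
            (\<forall>x\<in>Ms (Suc k). b k < x) \<and> Q (b ` {..<k}) (Ms k) (b k) (Ms (Suc k))" for k
    using AB by blast
  have dec: "\<And>k. Ms (Suc k) \<subseteq> Ms k" using Bk by blast
  have sm: "strict_mono b"
    unfolding strict_mono_Suc_iff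
  proof
    fix k show "b k < b (Suc k)" using Bk[of k] Bk[of "Suc k"] by blast
  qed
  have inj: "inj b" using sm by (rule strict_mono_imp_inj_on)
  have sub: "b ` {k..} \<subseteq> Ms k" for k
  proof
    fix x assume "x \<in> b ` {k..}"
    then obtain j where j: "k \<le> j" "x = b j" by auto
    have "Ms j \<subseteq> Ms k" using antimono_seq[of Ms k j] dec j(1) by blast
    then show "x \<in> Ms k" using Bk[of j] j(2) by blast
  qed
  define B where "B = range b"
  have BX: "B \<subseteq> X"
  proof
    fix x assume "x \<in> B"
    then obtain j where "x = b j" unfolding B_def by auto
    moreover have "b j \<in> b ` {0..}" by simp
    ultimately show "x \<in> X" using sub[of 0] M0 by blast
  qed
  have infB: "infinite B" unfolding B_def using inj by (simp add: finite_image_iff)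
  have main: False
    if CB: "C \<subseteq> B" and DB: "D \<subseteq> B" and iC: "infinite C" and iD: "infinite D"
      and H: "\<forall>S. S \<subseteq> D \<longrightarrow> infinite S \<longrightarrow> functional_computes \<Phi> S C" for C D \<Phi>
  proof -
    define e0 where "e0 = to_nat \<Phi>"
    have fe: "from_nat e0 = \<Phi>" unfolding e0_def by simp
    have "\<exists>k. e0 \<le> k \<and> b k \<in> C"
    proof (rule ccontr)
      assume nk: "\<not> (\<exists>k. e0 \<le> k \<and> b k \<in> C)"
      have "C \<subseteq> b ` {..<e0}"
      proof
        fix x assume x: "x \<in> C"
        then obtain j where j: "x = b j" using CB unfolding B_def by auto
        have "\<not> e0 \<le> j" using nk x j by blast
        then have "j < e0" by simp
        then show "x \<in> b ` {..<e0}" using j by simp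
      qed
      then have "finite C" by (rule finite_subset) simp
      then show False using iC by simp
    qed
    then obtain k where k: "e0 \<le> k" "b k \<in> C" by blast
    obtain Z where Z: "b k \<in> Z" "Z \<subseteq> Ms k" "\<forall>z\<in>Z. \<forall>y\<in>Ms (Suc k). z < y"
      and req: "\<forall>\<Phi>\<in>(from_nat :: nat \<Rightarrow> recf) ` {..card (b ` {..<k})}. \<forall>\<sigma>. \<sigma> \<subseteq> Ms (Suc k) \<longrightarrow>
                  sat \<Phi> \<sigma> (b k) 1 \<longrightarrow> (\<exists>z\<in>Z-{b k}. sat \<Phi> \<sigma> z 1)"
      using Bk[of k] unfolding Q_def by blast
    have "card (b ` {..<k}) = k" using inj by (simp add: card_image inj_on_subset)
    then have PhiE: "\<Phi> \<in> (from_nat :: nat \<Rightarrow> recf) ` {..card (b ` {..<k})}" using fe k(1) by auto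
    define S where "S = D \<inter> Ms (Suc k)"
    have "D \<subseteq> b ` {..k} \<union> S"
    proof
      fix x assume x: "x \<in> D"
      then obtain j where j: "x = b j" using DB unfolding B_def by auto
      show "x \<in> b ` {..k} \<union> S"
      proof (cases "j \<le> k")
        case True
        then show ?thesis using j by simp
      next
        case False
        then have "b j \<in> b ` {Suc k..}" by simp
        then have "x \<in> Ms (Suc k)" using sub[of "Suc k"] j by blast
        then show ?thesis using x unfolding S_def by simp
      qed
    qed
    then have iS: "infinite S"
    proof -
      assume Dsub: "D \<subseteq> b ` {..k} \<union> S"
      show "infinite S"
      proof
        assume "finite S"
        then have "finite (b ` {..k} \<union> S)" by simp
        then have "finite D" using Dsub by (rule finite_subset[rotated])
        then show False using iD by simp
      qed
    qed
    have SD: "S \<subseteq> D" unfolding S_def by simp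
    have "functional_computes \<Phi> S C" using H SD iS by blast
    then have "oeval S \<Phi> [b k] 1 \<longleftrightarrow> (1::nat) = (if b k \<in> C then 1 else 0)"
      unfolding functional_computes_def by blast
    then have "oeval S \<Phi> [b k] 1" using k(2) by simp
    then obtain u where u: "\<forall>A'. agr u S A' \<longrightarrow> oeval A' \<Phi> [b k] 1" using use_lemma by blast
    obtain t where t: "t \<in> S" "u \<le> t" using iS unfolding infinite_nat_iff_unbounded_le by blast
    define \<sigma> where "\<sigma> = S \<inter> {..t}"
    have fs: "finite \<sigma>" unfolding \<sigma>_def by simp
    have ts: "t \<in> \<sigma>" unfolding \<sigma>_def using t by simp
    have mx: "Max \<sigma> = t" unfolding \<sigma>_def using t by (intro Max_eqI) auto
    have sat1: "sat \<Phi> \<sigma> (b k) 1"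
      unfolding sat_def
    proof (intro conjI allI impI)
      show "\<sigma> \<noteq> {}" using ts by auto
      show "finite \<sigma>" by (rule fs)
      fix A' assume A': "\<forall>w\<le>Max \<sigma>. w \<in> A' \<longleftrightarrow> w \<in> \<sigma>"
      have "agr u S A'" unfolding agr_def
      proof (intro allI impI)
        fix w assume "w < u"
        then have "w \<le> t" using t(2) by simp
        then show "w \<in> A' \<longleftrightarrow> w \<in> S" using A' mx unfolding \<sigma>_def by auto
      qed
      then show "oeval A' \<Phi> [b k] 1" using u by blast
    qed
    have "\<sigma> \<subseteq> Ms (Suc k)" unfolding \<sigma>_def S_def by auto
    then obtain z where z: "z \<in> Z - {b k}" "sat \<Phi> \<sigma> z 1" using req PhiE sat1 by blast
    define S' where "S' = \<sigma> \<union> (D - {..t})"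
    have S'D: "S' \<subseteq> D" unfolding S'_def \<sigma>_def S_def by auto
    have iS': "infinite S'" unfolding S'_def using iD by (simp add: Diff_infinite_finite)
    have "\<forall>w\<le>Max \<sigma>. w \<in> S' \<longleftrightarrow> w \<in> \<sigma>" unfolding mx S'_def by auto
    then have "oeval S' \<Phi> [z] 1" using z(2) unfolding sat_def by blast
    moreover have "functional_computes \<Phi> S' C" using H S'D iS' by blast
    ultimately have "(1::nat) = (if z \<in> C then 1 else 0)" unfolding functional_computes_def by blast
    then have "z \<in> C" by (cases "z \<in> C") auto
    then obtain j where j: "z = b j" using CB unfolding B_def by auto
    show False
    proof (cases j k rule: linorder_cases)
      case less
      then have "Ms k \<subseteq> Ms (Suc j)" using antimono_seq[of Ms "Suc j" k] dec by simp
      then have "z \<in> Ms (Suc j)" using z(1) Z(2) by blast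
      then have "b j < z" using Bk[of j] by blast
      then show False using j by simp
    next
      case equal
      then show False using z(1) j by simp
    next
      case greater
      then have "b j \<in> b ` {Suc k..}" by simp
      then have "b j \<in> Ms (Suc k)" using sub[of "Suc k"] by blast
      then have "z < b j" using Z(3) z(1) by blast
      then show False using j by simp
    qed
  qed
  show ?thesis
  proof (intro exI[of _ B] conjI BX infB allI impI notI)
    fix C D assume "C \<subseteq> B" "D \<subseteq> B" "infinite C" "infinite D"
      "\<exists>\<Phi>. \<forall>S. S \<subseteq> D \<longrightarrow> infinite S \<longrightarrow> functional_computes \<Phi> S C"
    then show False using main by blast
  qed
qed

end
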